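(* Let $G$ be a non-amenable group, $H$ a subgroup of $G$, and $T$ a right transversal of $H$ in $G$ with $1\in T$; let $\pi_H\colon G\to H$ and $\pi_T\colon G\to T$ be the unique maps with $g=\pi_H(g)\pi_T(g)$ for all $g\in G$. Suppose $G$ has a $k$-paradoxical decomposition with translating sets $S_1,\ldots,S_k$ where $1\in S_1$, and let $S=\bigcup_{i=1}^k S_i$. Let $F$ be a finite nonempty subset of $T$, put $\Phi_i=\pi_T(FS_i^{-1})$, $\Phi=\pi_T(FS^{-1})=\bigcup_{i=1}^k\Phi_i$, and $S_i'=\Phi_iS_iF^{-1}\cap H$. Then: (i) If $|\Phi|=|F|$, then $H$ has a $k$-paradoxical decomposition with translating sets $S_1',\ldots,S_k'$; consequently $\mathcal{T}(H)\leq\sum_{i=1}^k|S_i'|$. (ii) If $|\Phi|\leq\frac{k}{2}|F|$, then $H$ has a $2$-paradoxical decomposition with total translating set $\bigcup_{i=1}^kS_i'$; consequently $\mathcal{T}(H)\leq 2\sum_{i=1}^k|S_i'|$.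
   Context: A right transversal of $H$ in $G$ is a subset containing exactly one element of each right coset $Hg$. For $k\geq 2$, a group $G$ admits a $k$-paradoxical decomposition with translating sets $S_1=\{g_{1,1},\ldots,g_{1,n_1}\},\ldots,S_k=\{g_{k,1},\ldots,g_{k,n_k}\}$ (finite subsets of $G$) if there are pairwise disjoint subsets $P_{i,j}$ ($1\le i\le k$, $1\le j\le n_i$) of $G$ with $G=\bigcup_{j=1}^{n_i}P_{i,j}g_{i,j}$ for each $i$; the set $\bigcup_i S_i$ is the total translating set. A $2$-paradoxical decomposition is a paradoxical decomposition, and the Tarski number $\mathcal{T}(G)$ of a non-amenable group is the minimum of $|S_1|+|S_2|$ over all $2$-paradoxical decompositions (equivalently, the minimal number of pieces $m+n$ in $G=\bigcup_{i=1}^mP_ig_i=\bigcup_{j=1}^nQ_jh_j$ with disjoint pieces). *)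

theory Defs
  imports "HOL-Algebra.Algebra"
begin

definition amenable :: "('a, 'b) monoid_scheme \<Rightarrow> bool" where
  "amenable G \<longleftrightarrow> (\<exists>\<mu> :: 'a set \<Rightarrow> real.
      \<mu> (carrier G) = 1
    \<and> (\<forall>A. A \<subseteq> carrier G \<longrightarrow> 0 \<le> \<mu> A)
    \<and> (\<forall>A B. A \<subseteq> carrier G \<longrightarrow> B \<subseteq> carrier G \<longrightarrow> A \<inter> B = {}
            \<longrightarrow> \<mu> (A \<union> B) = \<mu> A + \<mu> B)
    \<and> (\<forall>g\<in>carrier G. \<forall>A. A \<subseteq> carrier G \<longrightarrow> \<mu> (g <#\<^bsub>G\<^esub> A) = \<mu> A))"

definition k_paradoxical ::
  "('a, 'b) monoid_scheme \<Rightarrow> nat \<Rightarrow> (nat \<Rightarrow> 'a set) \<Rightarrow> bool" where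
  "k_paradoxical G k S \<longleftrightarrow> 2 \<le> k
    \<and> (\<forall>i\<in>{1..k}. finite (S i) \<and> S i \<subseteq> carrier G)
    \<and> (\<exists>P :: nat \<Rightarrow> 'a \<Rightarrow> 'a set.
         (\<forall>i\<in>{1..k}. \<forall>g\<in>S i. P i g \<subseteq> carrier G)
       \<and> (\<forall>i\<in>{1..k}. \<forall>g\<in>S i. \<forall>j\<in>{1..k}. \<forall>h\<in>S j.
            (i, g) \<noteq> (j, h) \<longrightarrow> P i g \<inter> P j h = {})
       \<and> (\<forall>i\<in>{1..k}. carrier G = (\<Union>g\<in>S i. P i g #>\<^bsub>G\<^esub> g)))"

definition tarski_number :: "('a, 'b) monoid_scheme \<Rightarrow> nat" where
  "tarski_number G =
     (LEAST n. \<exists>S. k_paradoxical G 2 S \<and> n = card (S 1) + card (S 2))"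

definition right_transversal ::
  "('a, 'b) monoid_scheme \<Rightarrow> 'a set \<Rightarrow> 'a set \<Rightarrow> bool" where
  "right_transversal G H T \<longleftrightarrow> T \<subseteq> carrier G
     \<and> (\<forall>g\<in>carrier G. \<exists>!t. t \<in> T \<and> t \<in> H #>\<^bsub>G\<^esub> g)"

end

theory Submission
  imports Defs
begin

lemma hall_infinite:
  fixes L :: "'l set" and N :: "'l \<Rightarrow> 'r set"
  assumes fin: "\<And>l. l \<in> L \<Longrightarrow> finite (N l)"
    and hall: "\<And>B. B \<subseteq> L \<Longrightarrow> finite B \<Longrightarrow> card B \<le> card (\<Union>(N ` B))"
  shows "\<exists>f. inj_on f L \<and> (\<forall>l\<in>L. f l \<in> N l)"
proof -
  define M where "M DD l = N l - {r. (l,r) \<in> DD}" for DD :: "('l \<times> 'r) set" and l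
  define ok where "ok DD \<longleftrightarrow> (\<forall>B. B \<subseteq> L \<longrightarrow> finite B \<longrightarrow> card B \<le> card (\<Union>(M DD ` B)))" for DD
  define AA where "AA = {DD. ok DD}"
  have finM: "finite (\<Union>(M DD ` B))" if "B \<subseteq> L" "finite B" for DD B
    using that fin by (auto simp: M_def)
  have "\<forall>C\<in>chains AA. \<Union>C \<in> AA"
  proof
    fix C assume C: "C \<in> chains AA"
    show "\<Union>C \<in> AA"
    proof (cases "C = {}")
      case True
      have "M {} = N" by (auto simp: M_def fun_eq_iff)
      then show ?thesis using True hall by (simp add: AA_def ok_def)
    next
      case False
      show ?thesis unfolding AA_def ok_def mem_Collect_eq
      proof (intro allI impI)
        fix B assume B: "B \<subseteq> L" "finite B"
        define P where "P = Sigma B N \<inter> \<Union>C"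
        have "finite (Sigma B N)" using B fin by auto
        hence "finite P" by (simp add: P_def)
        moreover have "P \<subseteq> \<Union>C" by (auto simp: P_def)
        moreover have "subset.chain AA C" using C by (simp add: chains_alt_def)
        ultimately obtain D0 where D0: "D0 \<in> C" "P \<subseteq> D0"
          using finite_subset_Union_chain[of P C AA] False by blast
        have "D0 \<in> AA" using C D0 by (auto simp: chains_def)
        hence ok0: "card B \<le> card (\<Union>(M D0 ` B))" using B by (simp add: AA_def ok_def)
        have "M D0 l = M (\<Union>C) l" if "l \<in> B" for l
          using that D0 by (auto simp: M_def P_def)
        hence "\<Union>(M D0 ` B) = \<Union>(M (\<Union>C) ` B)" by auto
        thus "card B \<le> card (\<Union>(M (\<Union>C) ` B))" using ok0 by simp
      qed
    qed
  qed
  then obtain DD where DA: "DD \<in> AA" and max: "\<forall>XX\<in>AA. DD \<subseteq> XX \<longrightarrow> XX = DD"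
    using Zorn_Lemma by blast
  have okD: "ok DD" using DA by (simp add: AA_def)
  have ne: "M DD l \<noteq> {}" if "l \<in> L" for l
  proof -
    have "card {l} \<le> card (\<Union>(M DD ` {l}))" using okD that by (auto simp: ok_def)
    thus ?thesis by auto
  qed
  have single: "a = b" if l: "l \<in> L" and ab: "a \<in> M DD l" "b \<in> M DD l" for l a b
  proof (rule ccontr)
    assume nab: "a \<noteq> b"
    have viol: "\<exists>XX. XX \<subseteq> L - {l} \<and> finite XX \<and> card (\<Union>(M DD ` XX) \<union> (M DD l - {c})) \<le> card XX"
      if c: "c \<in> M DD l" for c
    proof -
      have "insert (l,c) DD \<noteq> DD" using c by (auto simp: M_def)
      hence "\<not> ok (insert (l,c) DD)" using max unfolding AA_def mem_Collect_eq by blast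
      hence "\<exists>B. B \<subseteq> L \<and> finite B \<and> card (\<Union>(M (insert (l,c) DD) ` B)) < card B"
        by (simp add: ok_def not_le)
      then obtain B where B: "B \<subseteq> L" "finite B" "card (\<Union>(M (insert (l,c) DD) ` B)) < card B"
        by blast
      have Mi: "M (insert (l,c) DD) x = (if x = l then M DD l - {c} else M DD x)" for x
        by (auto simp: M_def)
      have lB: "l \<in> B"
      proof (rule ccontr)
        assume "l \<notin> B"
        hence eqU: "\<Union>(M (insert (l,c) DD) ` B) = \<Union>(M DD ` B)" using Mi by auto
        have "card B \<le> card (\<Union>(M DD ` B))" using okD B(1,2) unfolding ok_def by blast
        thus False using B(3) eqU by simp
      qed
      define XX where "XX = B - {l}"
      have "\<Union>(M (insert (l,c) DD) ` B) = \<Union>(M DD ` XX) \<union> (M DD l - {c})"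
        using lB Mi by (auto simp: XX_def split: if_splits)
      moreover have "card B > 0" using lB B(2) card_gt_0_iff by blast
      hence "card B = Suc (card XX)" using lB B(2) by (simp add: XX_def)
      ultimately have "card (\<Union>(M DD ` XX) \<union> (M DD l - {c})) \<le> card XX" using B(3) by simp
      moreover have "XX \<subseteq> L - {l}" "finite XX" using B(1,2) unfolding XX_def by auto
      ultimately show ?thesis by blast
    qed
    obtain XX where XX: "XX \<subseteq> L - {l}" "finite XX" "card (\<Union>(M DD ` XX) \<union> (M DD l - {a})) \<le> card XX"
      using viol[OF ab(1)] by blast
    obtain YY where YY: "YY \<subseteq> L - {l}" "finite YY" "card (\<Union>(M DD ` YY) \<union> (M DD l - {b})) \<le> card YY"
      using viol[OF ab(2)] by blast
    define U where "U = \<Union>(M DD ` XX) \<union> (M DD l - {a})"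
    define V where "V = \<Union>(M DD ` YY) \<union> (M DD l - {b})"
    have finU: "finite U" "finite V" using finM[of XX DD] finM[of YY DD] finM[of "{l}" DD] XX YY l
      by (auto simp: U_def V_def)
    have "\<Union>(M DD ` (insert l (XX \<union> YY))) \<subseteq> U \<union> V" using nab by (auto simp: U_def V_def)
    hence c1: "card (\<Union>(M DD ` (insert l (XX \<union> YY)))) \<le> card (U \<union> V)"
      using finU by (intro card_mono) auto
    have "\<Union>(M DD ` (XX \<inter> YY)) \<subseteq> U \<inter> V" by (auto simp: U_def V_def)
    hence c2: "card (\<Union>(M DD ` (XX \<inter> YY))) \<le> card (U \<inter> V)"
      using finU by (intro card_mono) auto
    have s1: "insert l (XX \<union> YY) \<subseteq> L" "finite (insert l (XX \<union> YY))" using XX YY l by auto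
    have h1: "card (insert l (XX \<union> YY)) \<le> card (\<Union>(M DD ` (insert l (XX \<union> YY))))"
      using okD s1 unfolding ok_def by blast
    have s2: "XX \<inter> YY \<subseteq> L" "finite (XX \<inter> YY)" using XX YY l by auto
    have h2: "card (XX \<inter> YY) \<le> card (\<Union>(M DD ` (XX \<inter> YY)))"
      using okD s2 unfolding ok_def by blast
    have "l \<notin> XX \<union> YY" using XX YY by blast
    hence "card (insert l (XX \<union> YY)) = Suc (card (XX \<union> YY))" using XX YY by simp
    moreover have "card (XX \<union> YY) + card (XX \<inter> YY) = card XX + card YY"
      using card_Un_Int[OF XX(2) YY(2)] by simp
    moreover have "card (U \<union> V) + card (U \<inter> V) = card U + card V"
      using card_Un_Int[OF finU] by simp
    moreover have "card U \<le> card XX" "card V \<le> card YY" using XX(3) YY(3) unfolding U_def V_def by simp_all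
    ultimately show False using c1 c2 h1 h2 by linarith
  qed
  define f where "f l = (SOME r. r \<in> M DD l)" for l
  have fM: "f l \<in> M DD l" if "l \<in> L" for l
    using ne[OF that] unfolding f_def by (metis ex_in_conv someI)
  have Meq: "M DD l = {f l}" if "l \<in> L" for l using fM[OF that] single[OF that] by blast
  have "inj_on f L"
  proof
    fix x y assume xy: "x \<in> L" "y \<in> L" "f x = f y"
    show "x = y"
    proof (rule ccontr)
      assume "x \<noteq> y"
      have "{x,y} \<subseteq> L" "finite {x,y}" using xy by auto
      hence "card {x,y} \<le> card (\<Union>(M DD ` {x,y}))" using okD unfolding ok_def by blast
      thus False using Meq xy \<open>x \<noteq> y\<close> by auto
    qed
  qed
  moreover have "\<forall>l\<in>L. f l \<in> N l" using fM by (auto simp: M_def)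
  ultimately show ?thesis by blast
qed


lemma (in group) par_hall:
  assumes kp: "k_paradoxical G k S"
    and B: "B \<subseteq> carrier G \<times> {1..k}" "finite B"
  shows "card B \<le> card (\<Union>b\<in>B. (\<lambda>g. fst b \<otimes>\<^bsub>G\<^esub> inv\<^bsub>G\<^esub> g) ` S (snd b))"
proof -
  obtain P where PG: "\<forall>i\<in>{1..k}. \<forall>g\<in>S i. P i g \<subseteq> carrier G"
    and Pd: "\<forall>i\<in>{1..k}. \<forall>g\<in>S i. \<forall>j\<in>{1..k}. \<forall>h\<in>S j. (i, g) \<noteq> (j, h) \<longrightarrow> P i g \<inter> P j h = {}"
    and Pc: "\<forall>i\<in>{1..k}. carrier G = (\<Union>g\<in>S i. P i g #> g)"
    and SG: "\<forall>i\<in>{1..k}. finite (S i) \<and> S i \<subseteq> carrier G"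
    using kp unfolding k_paradoxical_def by blast
  have ex: "\<exists>p g. g \<in> S i \<and> p \<in> P i g \<and> x = p \<otimes> g" if "x \<in> carrier G" "i \<in> {1..k}" for x i
  proof -
    from that Pc have "x \<in> (\<Union>g\<in>S i. P i g #> g)" by blast
    then show ?thesis unfolding r_coset_def by blast
  qed
  define \<iota> where "\<iota> b = (SOME p. \<exists>g. g \<in> S (snd b) \<and> p \<in> P (snd b) g \<and> fst b = p \<otimes> g)" for b
  have \<iota>: "\<exists>g. g \<in> S (snd b) \<and> \<iota> b \<in> P (snd b) g \<and> fst b = \<iota> b \<otimes> g" if "b \<in> B" for b
  proof -
    from that B have "fst b \<in> carrier G" "snd b \<in> {1..k}" by auto
    from ex[OF this] show ?thesis unfolding \<iota>_def by (rule someI_ex)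
  qed
  have inj: "inj_on \<iota> B"
  proof
    fix b c assume bc: "b \<in> B" "c \<in> B" "\<iota> b = \<iota> c"
    obtain g where g: "g \<in> S (snd b)" "\<iota> b \<in> P (snd b) g" "fst b = \<iota> b \<otimes> g" using \<iota>[OF bc(1)] by blast
    obtain h where h: "h \<in> S (snd c)" "\<iota> c \<in> P (snd c) h" "fst c = \<iota> c \<otimes> h" using \<iota>[OF bc(2)] by blast
    have "snd b \<in> {1..k}" "snd c \<in> {1..k}" using bc B by auto
    hence "(snd b, g) = (snd c, h)"
    proof (rule_tac ccontr)
      assume sbc: "snd b \<in> {1..k}" "snd c \<in> {1..k}" and ne: "(snd b, g) \<noteq> (snd c, h)"
      have "P (snd b) g \<inter> P (snd c) h = {}" using Pd[rule_format, OF sbc(1) g(1) sbc(2) h(1) ne] .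
      moreover from g(2) h(2) bc(3) have "\<iota> b \<in> P (snd b) g \<inter> P (snd c) h" by simp
      ultimately show False by simp
    qed
    hence e: "snd b = snd c" "g = h" by simp_all
    have "fst b = fst c" using g(3) h(3) bc(3) e(2) by simp
    thus "b = c" using e(1) prod_eq_iff by blast
  qed
  have "\<iota> ` B \<subseteq> (\<Union>b\<in>B. (\<lambda>g. fst b \<otimes> inv g) ` S (snd b))"
  proof
    fix y assume "y \<in> \<iota> ` B"
    then obtain b where b: "b \<in> B" "y = \<iota> b" by blast
    obtain g where g: "g \<in> S (snd b)" "\<iota> b \<in> P (snd b) g" "fst b = \<iota> b \<otimes> g" using \<iota>[OF b(1)] by blast
    have sb: "snd b \<in> {1..k}" using b B by auto
    have gc: "g \<in> carrier G" using SG sb g by blast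
    have pc: "\<iota> b \<in> carrier G" using PG sb g by blast
    have "fst b \<otimes> inv g = \<iota> b" using g(3) gc pc by (simp add: m_assoc)
    thus "y \<in> (\<Union>b\<in>B. (\<lambda>g. fst b \<otimes> inv g) ` S (snd b))" using b g by force
  qed
  moreover have "finite (\<Union>b\<in>B. (\<lambda>g. fst b \<otimes> inv g) ` S (snd b))"
    using B SG by (auto intro!: finite_UN_I)
  ultimately have "card (\<iota> ` B) \<le> card (\<Union>b\<in>B. (\<lambda>g. fst b \<otimes> inv g) ` S (snd b))"
    by (rule card_mono[rotated])
  thus ?thesis using card_image[OF inj] by simp
qed

lemma (in group) match_par:
  assumes sub: "subgroup H G" and k2: "2 \<le> k"
    and Sf: "\<forall>i\<in>{1..k}. finite (\<Sigma> i) \<and> \<Sigma> i \<subseteq> H"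
    and inj: "inj_on \<nu> (H \<times> {1..k})"
    and nu: "\<forall>h\<in>H. \<forall>i\<in>{1..k}. \<nu> (h,i) \<in> (\<lambda>s. h \<otimes>\<^bsub>G\<^esub> inv\<^bsub>G\<^esub> s) ` \<Sigma> i"
  shows "k_paradoxical (G\<lparr>carrier := H\<rparr>) k \<Sigma>"
proof -
  have HG: "H \<subseteq> carrier G" using sub by (rule subgroup.subset)
  define P where "P i s = {\<nu> (h,i) | h. h \<in> H \<and> \<nu> (h,i) \<otimes> s = h}" for i s
  have nu': "\<exists>s\<in>\<Sigma> i. \<nu> (h,i) = h \<otimes> inv s" if "h \<in> H" "i \<in> {1..k}" for h i
    using nu that by blast
  have PH: "P i s \<subseteq> H" if iS: "i \<in> {1..k}" "s \<in> \<Sigma> i" for i s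
  proof
    fix y assume "y \<in> P i s"
    then obtain h where h: "h \<in> H" "y = \<nu> (h,i)" "\<nu> (h,i) \<otimes> s = h" unfolding P_def by blast
    obtain s' where s': "s' \<in> \<Sigma> i" "\<nu> (h,i) = h \<otimes> inv s'" using nu'[OF h(1) iS(1)] by blast
    have "s' \<in> H" using Sf s' iS by blast
    thus "y \<in> H" using h s' sub by (simp add: subgroup.m_closed subgroup.m_inv_closed)
  qed
  have disj: "P i s \<inter> P j t = {}" if "i \<in> {1..k}" "s \<in> \<Sigma> i" "j \<in> {1..k}" "t \<in> \<Sigma> j" "(i,s) \<noteq> (j,t)" for i s j t
  proof (rule ccontr)
    assume "P i s \<inter> P j t \<noteq> {}"
    then obtain h h' where h: "h \<in> H" "\<nu> (h,i) \<otimes> s = h" and h': "h' \<in> H" "\<nu> (h',j) \<otimes> t = h'"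
      and eq: "\<nu> (h,i) = \<nu> (h',j)" unfolding P_def by blast
    have "(h,i) = (h',j)" using inj eq h h' that by (auto dest: inj_onD)
    hence hh: "h = h'" "i = j" by auto
    have "s \<in> carrier G" "t \<in> carrier G" using Sf that HG by blast+
    moreover have "\<nu> (h,i) \<in> carrier G" using PH[OF that(1,2)] HG h unfolding P_def by blast
    ultimately have "s = t" using h h' hh eq by (metis l_cancel)
    thus False using hh that by simp
  qed
  have cov: "H = (\<Union>s\<in>\<Sigma> i. P i s #>\<^bsub>G\<lparr>carrier := H\<rparr>\<^esub> s)" if i: "i \<in> {1..k}" for i
  proof
    show "H \<subseteq> (\<Union>s\<in>\<Sigma> i. P i s #>\<^bsub>G\<lparr>carrier := H\<rparr>\<^esub> s)"
    proof
      fix h assume h: "h \<in> H"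
      obtain s where s: "s \<in> \<Sigma> i" "\<nu> (h,i) = h \<otimes> inv s" using nu'[OF h i] by blast
      have sc: "s \<in> carrier G" "h \<in> carrier G" using Sf s i h HG by blast+
      hence eq: "\<nu> (h,i) \<otimes> s = h" using s by (simp add: m_assoc)
      hence "\<nu> (h,i) \<in> P i s" using h unfolding P_def by blast
      thus "h \<in> (\<Union>s\<in>\<Sigma> i. P i s #>\<^bsub>G\<lparr>carrier := H\<rparr>\<^esub> s)"
        using s eq unfolding r_coset_def by force
    qed
    show "(\<Union>s\<in>\<Sigma> i. P i s #>\<^bsub>G\<lparr>carrier := H\<rparr>\<^esub> s) \<subseteq> H"
      unfolding r_coset_def P_def by auto
  qed
  have A: "\<forall>i\<in>{1..k}. finite (\<Sigma> i) \<and> \<Sigma> i \<subseteq> carrier (G\<lparr>carrier:=H\<rparr>)" using Sf by simp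
  have B: "\<forall>i\<in>{1..k}. \<forall>g\<in>\<Sigma> i. P i g \<subseteq> carrier (G\<lparr>carrier:=H\<rparr>)" using PH by simp
  have C: "\<forall>i\<in>{1..k}. \<forall>g\<in>\<Sigma> i. \<forall>j\<in>{1..k}. \<forall>h\<in>\<Sigma> j. (i, g) \<noteq> (j, h) \<longrightarrow> P i g \<inter> P j h = {}"
    using disj by blast
  have D: "\<forall>i\<in>{1..k}. carrier (G\<lparr>carrier:=H\<rparr>) = (\<Union>g\<in>\<Sigma> i. P i g #>\<^bsub>G\<lparr>carrier := H\<rparr>\<^esub> g)"
    using cov by simp
  have E: "\<exists>P. (\<forall>i\<in>{1..k}. \<forall>g\<in>\<Sigma> i. P i g \<subseteq> carrier (G\<lparr>carrier:=H\<rparr>))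
     \<and> (\<forall>i\<in>{1..k}. \<forall>g\<in>\<Sigma> i. \<forall>j\<in>{1..k}. \<forall>h\<in>\<Sigma> j. (i, g) \<noteq> (j, h) \<longrightarrow> P i g \<inter> P j h = {})
     \<and> (\<forall>i\<in>{1..k}. carrier (G\<lparr>carrier:=H\<rparr>) = (\<Union>g\<in>\<Sigma> i. P i g #>\<^bsub>G\<lparr>carrier := H\<rparr>\<^esub> g))"
    by (intro exI[of _ P] conjI B C D)
  show ?thesis unfolding k_paradoxical_def by (intro conjI k2 A E)
qed

lemma par_two:
  assumes "k_paradoxical K k S"
  shows "k_paradoxical K 2 S"
proof -
  have sub: "{1..2} \<subseteq> {1..k}" and k2: "2 \<le> k" using assms unfolding k_paradoxical_def by auto
  have kd: "2 \<le> k \<and> (\<forall>i\<in>{1..k}. finite (S i) \<and> S i \<subseteq> carrier K) \<and> (\<exists>P. (\<forall>i\<in>{1..k}. \<forall>g\<in>S i. P i g \<subseteq> carrier K)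
     \<and> (\<forall>i\<in>{1..k}. \<forall>g\<in>S i. \<forall>j\<in>{1..k}. \<forall>h\<in>S j. (i, g) \<noteq> (j, h) \<longrightarrow> P i g \<inter> P j h = {})
     \<and> (\<forall>i\<in>{1..k}. carrier K = (\<Union>g\<in>S i. P i g #>\<^bsub>K\<^esub> g)))"
    using assms unfolding k_paradoxical_def .
  note F = kd[THEN conjunct2, THEN conjunct1]
  obtain P where PP: "(\<forall>i\<in>{1..k}. \<forall>g\<in>S i. P i g \<subseteq> carrier K)
     \<and> (\<forall>i\<in>{1..k}. \<forall>g\<in>S i. \<forall>j\<in>{1..k}. \<forall>h\<in>S j. (i, g) \<noteq> (j, h) \<longrightarrow> P i g \<inter> P j h = {})
     \<and> (\<forall>i\<in>{1..k}. carrier K = (\<Union>g\<in>S i. P i g #>\<^bsub>K\<^esub> g))"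
    using kd[THEN conjunct2, THEN conjunct2] by (rule exE)
  note P = PP[THEN conjunct1] PP[THEN conjunct2, THEN conjunct1] PP[THEN conjunct2, THEN conjunct2]
  have A: "\<forall>i\<in>{1..2}. finite (S i) \<and> S i \<subseteq> carrier K" using F sub by blast
  have B: "\<forall>i\<in>{1..2}. \<forall>g\<in>S i. P i g \<subseteq> carrier K" using P(1) sub by blast
  have C: "\<forall>i\<in>{1..2}. \<forall>g\<in>S i. \<forall>j\<in>{1..2}. \<forall>h\<in>S j. (i, g) \<noteq> (j, h) \<longrightarrow> P i g \<inter> P j h = {}"
    using P(2) sub by blast
  have D: "\<forall>i\<in>{1..2}. carrier K = (\<Union>g\<in>S i. P i g #>\<^bsub>K\<^esub> g)" using P(3) sub by blast
  have E: "\<exists>P. (\<forall>i\<in>{1..2}. \<forall>g\<in>S i. P i g \<subseteq> carrier K)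
     \<and> (\<forall>i\<in>{1..2}. \<forall>g\<in>S i. \<forall>j\<in>{1..2}. \<forall>h\<in>S j. (i, g) \<noteq> (j, h) \<longrightarrow> P i g \<inter> P j h = {})
     \<and> (\<forall>i\<in>{1..2}. carrier K = (\<Union>g\<in>S i. P i g #>\<^bsub>K\<^esub> g))"
    by (intro exI[of _ P] conjI B C D)
  show ?thesis unfolding k_paradoxical_def by (intro conjI order_refl A E)
qed

lemma tarski_le:
  assumes "k_paradoxical K 2 S"
  shows "tarski_number K \<le> card (S 1) + card (S 2)"
  unfolding tarski_number_def using assms by (intro Least_le) blast


lemma (in group) dec:
  assumes sub: "subgroup H G" and tr: "right_transversal G H T"
    and pi: "\<forall>g\<in>carrier G. piH g \<in> H \<and> piT g \<in> T \<and> g = piH g \<otimes> piT g"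
    and h: "h \<in> H" and t: "t \<in> T"
  shows "piT (h \<otimes> t) = t \<and> piH (h \<otimes> t) = h"
proof -
  have HG: "H \<subseteq> carrier G" using sub by (rule subgroup.subset)
  have TG: "T \<subseteq> carrier G" using tr unfolding right_transversal_def by blast
  have hc: "h \<in> carrier G" and tc: "t \<in> carrier G" using h t HG TG by auto
  obtain x where x_def: "x = h \<otimes> t" by blast
  have xc: "x \<in> carrier G" using hc tc by (simp add: x_def)
  have u: "\<exists>!t'. t' \<in> T \<and> t' \<in> H #> x" using tr xc unfolding right_transversal_def by blast
  have px: "piH x \<in> H" "piT x \<in> T" "x = piH x \<otimes> piT x" using pi xc by auto
  have pc: "piH x \<in> carrier G" "piT x \<in> carrier G" using px HG TG by auto
  have "inv h \<in> H" using h sub by (simp add: subgroup.m_inv_closed)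
  moreover have "t = inv h \<otimes> x" using hc tc by (simp add: x_def m_assoc[symmetric])
  ultimately have t1: "t \<in> H #> x" unfolding r_coset_def by blast
  have "inv (piH x) \<in> H" using px(1) sub by (simp add: subgroup.m_inv_closed)
  moreover have "inv (piH x) \<otimes> (piH x \<otimes> piT x) = piT x" using pc by (simp add: m_assoc[symmetric])
  hence "inv (piH x) \<otimes> x = piT x" using px(3)[symmetric] by simp
  ultimately have t2: "piT x \<in> H #> x" unfolding r_coset_def by force
  have e: "piT x = t" using u t t1 px(2) t2 by blast
  have "h \<otimes> t = piH x \<otimes> t" using px(3) e x_def by metis
  hence "piH x = h" using hc tc pc by simp
  thus ?thesis using e x_def by simp
qed

lemma fin_set_mult: "finite A \<Longrightarrow> finite B \<Longrightarrow> finite (A <#>\<^bsub>G\<^esub> B)"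
  by (simp add: set_mult_def)

lemma mem_set_mult: "a \<in> A \<Longrightarrow> b \<in> B \<Longrightarrow> a \<otimes>\<^bsub>G\<^esub> b \<in> A <#>\<^bsub>G\<^esub> B"
  unfolding set_mult_def by blast

lemma mem_set_inv: "a \<in> A \<Longrightarrow> inv\<^bsub>G\<^esub> a \<in> set_inv\<^bsub>G\<^esub> A"
  unfolding SET_INV_def by blast

lemma fin_set_inv: "finite A \<Longrightarrow> finite (set_inv\<^bsub>G\<^esub> A)"
  by (simp add: SET_INV_def)

lemma (in group) key_ineq:
  assumes sub: "subgroup H G" and tr: "right_transversal G H T"
    and pi: "\<forall>g\<in>carrier G. piH g \<in> H \<and> piT g \<in> T \<and> g = piH g \<otimes> piT g"
    and kp: "k_paradoxical G k S" and fF: "finite F" and FT: "F \<subseteq> T"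
    and B: "B \<subseteq> H \<times> {1..k}" "finite B"
  shows "card B * card F \<le> card (\<Union>b\<in>B. (\<lambda>s. fst b \<otimes> inv s) `
            ((piT ` (F <#> set_inv (S (snd b))) <#> S (snd b) <#> set_inv F) \<inter> H))
          * card (piT ` (F <#> set_inv (\<Union>i\<in>{1..k}. S i)))"
proof -
  define S' where "S' i = (piT ` (F <#> set_inv (S i)) <#> S i <#> set_inv F) \<inter> H" for i
  define PA where "PA = piT ` (F <#> set_inv (\<Union>i\<in>{1..k}. S i))"
  define NH where "NH = (\<Union>b\<in>B. (\<lambda>s. fst b \<otimes> inv s) ` S' (snd b))"
  have HG: "H \<subseteq> carrier G" using sub by (rule subgroup.subset)
  have TG: "T \<subseteq> carrier G" using tr unfolding right_transversal_def by blast
  have SG: "\<forall>i\<in>{1..k}. finite (S i) \<and> S i \<subseteq> carrier G" using kp unfolding k_paradoxical_def by blast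
  have finS': "finite (S' i)" if "i \<in> {1..k}" for i
    using SG that fF unfolding S'_def by (intro finite_Int disjI1 fin_set_mult fin_set_inv finite_imageI) auto
  have finNH: "finite NH" unfolding NH_def using B finS' by (auto intro!: finite_UN_I)
  have finPA: "finite PA" unfolding PA_def using SG fF by (intro finite_imageI fin_set_mult fin_set_inv) auto
  define m where "m p = (fst (fst p) \<otimes> snd p, snd (fst p))" for p :: "('a \<times> nat) \<times> 'a"
  define Bt where "Bt = m ` (B \<times> F)"
  have inj: "inj_on m (B \<times> F)"
  proof
    fix p q assume pq: "p \<in> B \<times> F" "q \<in> B \<times> F" "m p = m q"
    have "fst (fst p) \<in> H" "fst (fst q) \<in> H" "snd p \<in> T" "snd q \<in> T" using pq B FT by auto
    hence d1: "piT (fst (fst p) \<otimes> snd p) = snd p \<and> piH (fst (fst p) \<otimes> snd p) = fst (fst p)"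
      and d2: "piT (fst (fst q) \<otimes> snd q) = snd q \<and> piH (fst (fst q) \<otimes> snd q) = fst (fst q)"
      using dec[OF sub tr pi] by blast+
    have e1: "fst (fst p) \<otimes> snd p = fst (fst q) \<otimes> snd q" "snd (fst p) = snd (fst q)"
      using pq(3) unfolding m_def by auto
    have "snd p = snd q" "fst (fst p) = fst (fst q)" using d1 d2 e1 by metis+
    thus "p = q" using e1(2) by (simp add: prod_eq_iff)
  qed
  have cBt: "card Bt = card B * card F" unfolding Bt_def using card_image[OF inj] card_cartesian_product by simp
  have BtG: "Bt \<subseteq> carrier G \<times> {1..k}" unfolding Bt_def m_def using B FT HG TG by (fastforce intro!: m_closed)
  have finBt: "finite Bt" unfolding Bt_def using B fF by simp
  have hallG: "card Bt \<le> card (\<Union>c\<in>Bt. (\<lambda>g. fst c \<otimes> inv g) ` S (snd c))"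
    by (rule par_hall[OF kp BtG finBt])
  have incl: "(\<Union>c\<in>Bt. (\<lambda>g. fst c \<otimes> inv g) ` S (snd c)) \<subseteq> (\<lambda>p. fst p \<otimes> snd p) ` (NH \<times> PA)"
  proof
    fix e assume "e \<in> (\<Union>c\<in>Bt. (\<lambda>g. fst c \<otimes> inv g) ` S (snd c))"
    then obtain b f g where bf: "b \<in> B" "f \<in> F" and g: "g \<in> S (snd b)" and e: "e = (fst b \<otimes> f) \<otimes> inv g"
      unfolding Bt_def m_def by auto
    define h where "h = fst b"
    define i where "i = snd b"
    have h: "h \<in> H" and i: "i \<in> {1..k}" using bf B unfolding h_def i_def by auto
    have gi: "g \<in> S i" using g i_def by simp
    have hc: "h \<in> carrier G" using h HG by auto
    have fc: "f \<in> carrier G" using bf FT TG by auto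
    have gc: "g \<in> carrier G" using SG i gi by auto
    define z where "z = f \<otimes> inv g"
    have zc: "z \<in> carrier G" using fc gc by (simp add: z_def)
    have pz: "piH z \<in> H" "piT z \<in> T" "z = piH z \<otimes> piT z" using pi zc by auto
    have pzc: "piH z \<in> carrier G" "piT z \<in> carrier G" using pz HG TG by auto
    define \<phi> where "\<phi> = piT z"
    define s where "s = inv (piH z)"
    have z1: "z \<in> F <#> set_inv (S i)" unfolding set_mult_def SET_INV_def z_def using bf(2) gi by blast
    have z2: "z \<in> F <#> set_inv (\<Union>i\<in>{1..k}. S i)" unfolding set_mult_def SET_INV_def z_def using bf(2) gi i by blast
    have phi1: "\<phi> \<in> piT ` (F <#> set_inv (S i))" using z1 unfolding \<phi>_def by blast
    have phiPA: "\<phi> \<in> PA" using z2 unfolding \<phi>_def PA_def by blast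
    have sH: "s \<in> H" unfolding s_def using pz(1) sub by (simp add: subgroup.m_inv_closed)
    have "piH z = z \<otimes> inv \<phi>"
    proof -
      have "(piH z \<otimes> piT z) \<otimes> inv (piT z) = piH z" using pzc by (simp add: m_assoc)
      thus ?thesis using pz(3) unfolding \<phi>_def by metis
    qed
    hence "s = \<phi> \<otimes> inv z" unfolding s_def \<phi>_def using zc pzc by (simp add: inv_mult_group)
    also have "\<dots> = (\<phi> \<otimes> g) \<otimes> inv f" unfolding z_def using fc gc pzc(2) \<phi>_def
      by (simp add: inv_mult_group m_assoc)
    finally have seq: "s = (\<phi> \<otimes> g) \<otimes> inv f" .
    have "s \<in> piT ` (F <#> set_inv (S i)) <#> S i <#> set_inv F"
      unfolding seq by (intro mem_set_mult mem_set_inv phi1 gi bf(2))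
    hence sS': "s \<in> S' i" using sH unfolding S'_def by blast
    have "e = h \<otimes> z" unfolding e h_def z_def using hc fc gc h_def by (simp add: m_assoc)
    also have "\<dots> = (h \<otimes> inv s) \<otimes> \<phi>" unfolding s_def \<phi>_def using pz(3) hc pzc
      by (metis m_assoc inv_inv)
    finally have ee: "e = (h \<otimes> inv s) \<otimes> \<phi>" .
    have "h \<otimes> inv s \<in> NH" unfolding NH_def using bf(1) sS' h_def i_def by blast
    thus "e \<in> (\<lambda>p. fst p \<otimes> snd p) ` (NH \<times> PA)" using ee phiPA by force
  qed
  have "card (\<Union>c\<in>Bt. (\<lambda>g. fst c \<otimes> inv g) ` S (snd c)) \<le> card ((\<lambda>p. fst p \<otimes> snd p) ` (NH \<times> PA))"
    using finNH finPA by (intro card_mono[OF _ incl]) simp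
  also have "\<dots> \<le> card (NH \<times> PA)" by (rule card_image_le) (simp add: finNH finPA)
  also have "\<dots> = card NH * card PA" by (rule card_cartesian_product)
  finally show ?thesis using hallG cBt unfolding NH_def PA_def S'_def by simp
qed


theorem proposition3p1:
  fixes G :: "('a, 'b) monoid_scheme"
    and H T F :: "'a set"
    and piH piT :: "'a \<Rightarrow> 'a"
    and k :: nat
    and S :: "nat \<Rightarrow> 'a set"
  assumes "group G"
    and "\<not> amenable G"
    and "subgroup H G"
    and "right_transversal G H T"
    and "\<one>\<^bsub>G\<^esub> \<in> T"
    and "\<forall>g\<in>carrier G. piH g \<in> H \<and> piT g \<in> T \<and> g = piH g \<otimes>\<^bsub>G\<^esub> piT g"
    and "k_paradoxical G k S"
    and "\<one>\<^bsub>G\<^esub> \<in> S 1"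
    and "finite F" and "F \<noteq> {}" and "F \<subseteq> T"
  defines "Phi \<equiv> (\<lambda>i. piT ` (F <#>\<^bsub>G\<^esub> set_inv\<^bsub>G\<^esub> (S i)))"
    and "PhiAll \<equiv> piT ` (F <#>\<^bsub>G\<^esub> set_inv\<^bsub>G\<^esub> (\<Union>i\<in>{1..k}. S i))"
    and "S' \<equiv> (\<lambda>i. (piT ` (F <#>\<^bsub>G\<^esub> set_inv\<^bsub>G\<^esub> (S i)) <#>\<^bsub>G\<^esub> S i <#>\<^bsub>G\<^esub> set_inv\<^bsub>G\<^esub> F) \<inter> H)"
  shows "(card PhiAll = card F \<longrightarrow>
            k_paradoxical (G\<lparr>carrier := H\<rparr>) k S'
          \<and> tarski_number (G\<lparr>carrier := H\<rparr>) \<le> (\<Sum>i\<in>{1..k}. card (S' i)))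
       \<and> (real (card PhiAll) \<le> real k / 2 * real (card F) \<longrightarrow>
            (\<exists>S2. k_paradoxical (G\<lparr>carrier := H\<rparr>) 2 S2
                 \<and> S2 1 \<union> S2 2 = (\<Union>i\<in>{1..k}. S' i))
          \<and> tarski_number (G\<lparr>carrier := H\<rparr>) \<le> 2 * (\<Sum>i\<in>{1..k}. card (S' i)))"
proof -
  note grp = assms(1) and sub = assms(3) and tr = assms(4) and pi = assms(6) and kp = assms(7)
    and fF = assms(9) and Fne = assms(10) and FT = assms(11)
  interpret group G by (rule grp)
  have HG: "H \<subseteq> carrier G" using sub by (rule subgroup.subset)
  have k2: "2 \<le> k" and SG: "\<forall>i\<in>{1..k}. finite (S i) \<and> S i \<subseteq> carrier G"
    using kp unfolding k_paradoxical_def by blast+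
  have Sf: "\<forall>i\<in>{1..k}. finite (S' i) \<and> S' i \<subseteq> H"
  proof
    fix i assume "i \<in> {1..k}"
    thus "finite (S' i) \<and> S' i \<subseteq> H"
      using SG fF unfolding S'_def by (intro conjI finite_Int disjI1 fin_set_mult fin_set_inv finite_imageI) auto
  qed
  have key: "card B * card F \<le> card (\<Union>b\<in>B. (\<lambda>s. fst b \<otimes>\<^bsub>G\<^esub> inv\<^bsub>G\<^esub> s) ` S' (snd b)) * card PhiAll"
    if "B \<subseteq> H \<times> {1..k}" "finite B" for B
    unfolding S'_def PhiAll_def using key_ineq[OF sub tr pi kp fF FT that] by simp
  have cF: "card F > 0" using fF Fne by (simp add: card_gt_0_iff)
  have SS: "card (S' 1) + card (S' 2) \<le> (\<Sum>i\<in>{1..k}. card (S' i))"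
  proof -
    have "(\<Sum>i\<in>{1,2}. card (S' i)) \<le> (\<Sum>i\<in>{1..k}. card (S' i))"
      using k2 by (intro sum_mono2) auto
    thus ?thesis by simp
  qed
  have P1: "k_paradoxical (G\<lparr>carrier := H\<rparr>) k S' \<and> tarski_number (G\<lparr>carrier := H\<rparr>) \<le> (\<Sum>i\<in>{1..k}. card (S' i))"
    if eq: "card PhiAll = card F"
  proof -
    have "\<exists>f. inj_on f (H \<times> {1..k}) \<and> (\<forall>l\<in>H \<times> {1..k}. f l \<in> (\<lambda>s. fst l \<otimes>\<^bsub>G\<^esub> inv\<^bsub>G\<^esub> s) ` S' (snd l))"
    proof (rule hall_infinite)
      fix l assume "l \<in> H \<times> {1..k}"
      thus "finite ((\<lambda>s. fst l \<otimes>\<^bsub>G\<^esub> inv\<^bsub>G\<^esub> s) ` S' (snd l))" using Sf by auto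
    next
      fix B assume B: "B \<subseteq> H \<times> {1..k}" "finite B"
      have "card B * card F \<le> card (\<Union>b\<in>B. (\<lambda>s. fst b \<otimes>\<^bsub>G\<^esub> inv\<^bsub>G\<^esub> s) ` S' (snd b)) * card F"
        using key[OF B] eq by simp
      thus "card B \<le> card (\<Union>b\<in>B. (\<lambda>s. fst b \<otimes>\<^bsub>G\<^esub> inv\<^bsub>G\<^esub> s) ` S' (snd b))" using cF by simp
    qed
    then obtain \<nu> where nu: "inj_on \<nu> (H \<times> {1..k})" "\<forall>l\<in>H \<times> {1..k}. \<nu> l \<in> (\<lambda>s. fst l \<otimes>\<^bsub>G\<^esub> inv\<^bsub>G\<^esub> s) ` S' (snd l)"
      by blast
    have nu': "\<forall>h\<in>H. \<forall>i\<in>{1..k}. \<nu> (h,i) \<in> (\<lambda>s. h \<otimes>\<^bsub>G\<^esub> inv\<^bsub>G\<^esub> s) ` S' i" using nu(2) by auto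
    have kpH: "k_paradoxical (G\<lparr>carrier := H\<rparr>) k S'" by (rule match_par[OF sub k2 Sf nu(1) nu'])
    have "tarski_number (G\<lparr>carrier := H\<rparr>) \<le> card (S' 1) + card (S' 2)"
      by (rule tarski_le[OF par_two[OF kpH]])
    thus ?thesis using kpH SS by simp
  qed
  define U where "U = (\<Union>i\<in>{1..k}. S' i)"
  have Uf: "finite U" "U \<subseteq> H" using Sf unfolding U_def by auto
  have P2: "(\<exists>S2. k_paradoxical (G\<lparr>carrier := H\<rparr>) 2 S2 \<and> S2 1 \<union> S2 2 = (\<Union>i\<in>{1..k}. S' i))
          \<and> tarski_number (G\<lparr>carrier := H\<rparr>) \<le> 2 * (\<Sum>i\<in>{1..k}. card (S' i))"
    if le: "real (card PhiAll) \<le> real k / 2 * real (card F)"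
  proof -
    have "\<exists>f. inj_on f (H \<times> {1..2::nat}) \<and> (\<forall>l\<in>H \<times> {1..2}. f l \<in> (\<lambda>s. fst l \<otimes>\<^bsub>G\<^esub> inv\<^bsub>G\<^esub> s) ` U)"
    proof (rule hall_infinite)
      fix l assume "l \<in> H \<times> {1..2::nat}"
      thus "finite ((\<lambda>s. fst l \<otimes>\<^bsub>G\<^esub> inv\<^bsub>G\<^esub> s) ` U)" using Uf by auto
    next
      fix B :: "('a \<times> nat) set" assume B: "B \<subseteq> H \<times> {1..2}" "finite B"
      define A where "A = fst ` B"
      have fA: "finite A" "A \<subseteq> H" using B unfolding A_def by auto
      have B': "A \<times> {1..k} \<subseteq> H \<times> {1..k}" "finite (A \<times> {1..k})" using fA by auto
      define W where "W = (\<Union>b\<in>B. (\<lambda>s. fst b \<otimes>\<^bsub>G\<^esub> inv\<^bsub>G\<^esub> s) ` U)"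
      have Weq: "(\<Union>b\<in>A \<times> {1..k}. (\<lambda>s. fst b \<otimes>\<^bsub>G\<^esub> inv\<^bsub>G\<^esub> s) ` S' (snd b)) = W"
        unfolding W_def U_def A_def by force
      have k1: "card (A \<times> {1..k}) * card F \<le> card W * card PhiAll"
        using key[OF B'] Weq by simp
      have "real k * real (card A) * real (card F) \<le> real (card W) * real (card PhiAll)"
        using k1 card_cartesian_product[of A "{1..k}"] by (simp add: of_nat_mult[symmetric] mult.commute mult.left_commute del: of_nat_mult)
      also have "\<dots> \<le> real (card W) * (real k / 2 * real (card F))"
        using le by (intro mult_left_mono) auto
      finally have "(real (2 * card A)) * (real k * real (card F)) \<le> real (card W) * (real k * real (card F))"
        by (simp add: algebra_simps)
      moreover have "real k * real (card F) > 0" using k2 cF by simp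
      ultimately have cAW: "2 * card A \<le> card W"
        by (metis mult_le_cancel_right of_nat_le_iff not_less)
      have "B \<subseteq> A \<times> {1..2}" using B unfolding A_def by force
      hence "card B \<le> card (A \<times> {1..2::nat})" using fA by (intro card_mono) auto
      also have "\<dots> = 2 * card A" by (simp add: card_cartesian_product)
      finally show "card B \<le> card (\<Union>b\<in>B. (\<lambda>s. fst b \<otimes>\<^bsub>G\<^esub> inv\<^bsub>G\<^esub> s) ` U)" using cAW unfolding W_def by simp
    qed
    then obtain \<nu> where nu: "inj_on \<nu> (H \<times> {1..2::nat})" "\<forall>l\<in>H \<times> {1..2}. \<nu> l \<in> (\<lambda>s. fst l \<otimes>\<^bsub>G\<^esub> inv\<^bsub>G\<^esub> s) ` U"
      by blast
    have nu': "\<forall>h\<in>H. \<forall>i\<in>{1..2}. \<nu> (h,i) \<in> (\<lambda>s. h \<otimes>\<^bsub>G\<^esub> inv\<^bsub>G\<^esub> s) ` ((\<lambda>_. U) i)" using nu(2) by auto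
    have Uf': "\<forall>i\<in>{1..2::nat}. finite ((\<lambda>_. U) i) \<and> (\<lambda>_. U) i \<subseteq> H" using Uf by simp
    have kpH: "k_paradoxical (G\<lparr>carrier := H\<rparr>) 2 (\<lambda>_. U)"
      by (rule match_par[OF sub order_refl Uf' nu(1) nu'])
    have "tarski_number (G\<lparr>carrier := H\<rparr>) \<le> card U + card U"
      using tarski_le[OF kpH] by simp
    also have "card U \<le> (\<Sum>i\<in>{1..k}. card (S' i))" unfolding U_def by (rule card_UN_le) simp
    finally have "tarski_number (G\<lparr>carrier := H\<rparr>) \<le> 2 * (\<Sum>i\<in>{1..k}. card (S' i))" by simp
    moreover have "(\<lambda>_. U) (1::nat) \<union> (\<lambda>_. U) (2::nat) = (\<Union>i\<in>{1..k}. S' i)" unfolding U_def by simp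
    ultimately show ?thesis using kpH by blast
  qed
  show ?thesis using P1 P2 by blast
qed

end
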